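(* The representable left $k[\Delta_{a,\mathrm{inj}}]$-modules $P_n:=k[\Delta_{a,\mathrm{inj}}]([n],-)$, $n\ge0$, with differentials $P_n\to P_{n-1}$ given by precomposition with $\sum_{i=0}^n(-1)^i\delta^i$, and with augmentation $\varepsilon\colon P_0\to k_\bullet[0]$ equal to $1$ on basis morphisms in nonnegative degrees and $0$ at $[-1]$, form a projective resolution of $k_\bullet[0]$ in the category of left $k[\Delta_{a,\mathrm{inj}}]$-modules.
   Context: $k$ is a field; $k[\mathcal C]$ is the $k$-linearization of a small category. A left module over a $k$-linear category is a $k$-linear functor to $\mathrm{Vect}_k$. $\Delta_{a,\mathrm{inj}}$ has objects $[n]=\{0<\dots<n\}$, $n\ge0$, and $[-1]=\varnothing$, with injective order-preserving maps as morphisms; $\delta^i\colon[n-1]\to[n]$ ($0\le i\le n$) omits $i$. $k_\bullet[0]$ is the left $k[\Delta_{a,\mathrm{inj}}]$-module with value $k$ at $[n]$ for $n\ge0$ and $0$ at $[-1]$, every morphism between nonnegative objects acting by the identity (it is the left Kan extension of the constant module $k$ on $\Delta_{\mathrm{inj}}$ along the inclusion $\Delta_{\mathrm{inj}}\hookrightarrow\Delta_{a,\mathrm{inj}}$). *)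

theory Defs
  imports Main "HOL.Vector_Spaces" "HOL-Library.FuncSet" "HOL-Library.Poly_Mapping"
begin

text \<open>Objects are integers n \<ge> -1; the object [n] is the ordinal {0,...,n} (empty for n = -1).\<close>
definition ob :: "int \<Rightarrow> nat set" where
  "ob n = {i. int i \<le> n}"

definition hom :: "int \<Rightarrow> int \<Rightarrow> (nat \<Rightarrow> nat) set" where
  "hom m n = {f \<in> ob m \<rightarrow>\<^sub>E ob n. inj_on f (ob m) \<and> mono_on (ob m) f}"

definition cmp :: "int \<Rightarrow> (nat \<Rightarrow> nat) \<Rightarrow> (nat \<Rightarrow> nat) \<Rightarrow> (nat \<Rightarrow> nat)" where
  "cmp m g f = compose (ob m) g f"

definition idm :: "int \<Rightarrow> (nat \<Rightarrow> nat)" where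
  "idm m = restrict id (ob m)"

definition delta :: "int \<Rightarrow> nat \<Rightarrow> (nat \<Rightarrow> nat)" where
  "delta n i = (\<lambda>j\<in>ob (n - 1). if j < i then j else Suc j)"

text \<open>A left module (k-linear functor to Vect_k) is given by an ambient k-vector space
  (type 'v with scalar multiplication sc), a subspace V n for each object [n],
  and action maps A m n f : V m \<rightarrow> V n for each morphism f : [m] \<rightarrow> [n],
  which are k-linear and functorial.\<close>
definition is_lmod ::
  "('k::field \<Rightarrow> 'v::ab_group_add \<Rightarrow> 'v) \<Rightarrow> (int \<Rightarrow> 'v set) \<Rightarrow>
   (int \<Rightarrow> int \<Rightarrow> (nat \<Rightarrow> nat) \<Rightarrow> 'v \<Rightarrow> 'v) \<Rightarrow> bool" where
  "is_lmod sc V A \<longleftrightarrow>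
     vector_space sc \<and>
     (\<forall>n\<ge>-1. module.subspace sc (V n)) \<and>
     (\<forall>m\<ge>-1. \<forall>n\<ge>-1. \<forall>f\<in>hom m n.
        (\<forall>x\<in>V m. A m n f x \<in> V n) \<and>
        (\<forall>x\<in>V m. \<forall>y\<in>V m. A m n f (x + y) = A m n f x + A m n f y) \<and>
        (\<forall>c. \<forall>x\<in>V m. A m n f (sc c x) = sc c (A m n f x))) \<and>
     (\<forall>m\<ge>-1. \<forall>x\<in>V m. A m m (idm m) x = x) \<and>
     (\<forall>l\<ge>-1. \<forall>m\<ge>-1. \<forall>n\<ge>-1. \<forall>f\<in>hom l m. \<forall>g\<in>hom m n. \<forall>x\<in>V l.
        A l n (cmp l g f) x = A m n g (A l m f x))"

definition is_lmod_hom ::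
  "('k::field \<Rightarrow> 'v::ab_group_add \<Rightarrow> 'v) \<Rightarrow> (int \<Rightarrow> 'v set) \<Rightarrow>
   (int \<Rightarrow> int \<Rightarrow> (nat \<Rightarrow> nat) \<Rightarrow> 'v \<Rightarrow> 'v) \<Rightarrow>
   ('k \<Rightarrow> 'w::ab_group_add \<Rightarrow> 'w) \<Rightarrow> (int \<Rightarrow> 'w set) \<Rightarrow>
   (int \<Rightarrow> int \<Rightarrow> (nat \<Rightarrow> nat) \<Rightarrow> 'w \<Rightarrow> 'w) \<Rightarrow> (int \<Rightarrow> 'v \<Rightarrow> 'w) \<Rightarrow> bool" where
  "is_lmod_hom sc V A sc' W B eta \<longleftrightarrow>
     (\<forall>n\<ge>-1. (\<forall>x\<in>V n. eta n x \<in> W n) \<and>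
        (\<forall>x\<in>V n. \<forall>y\<in>V n. eta n (x + y) = eta n x + eta n y) \<and>
        (\<forall>c. \<forall>x\<in>V n. eta n (sc c x) = sc' c (eta n x))) \<and>
     (\<forall>m\<ge>-1. \<forall>n\<ge>-1. \<forall>f\<in>hom m n. \<forall>x\<in>V m. eta n (A m n f x) = B m n f (eta m x))"

definition is_lmod_epi where
  "is_lmod_epi sc V A sc' W B p \<longleftrightarrow>
     is_lmod_hom sc V A sc' W B p \<and> (\<forall>n\<ge>-1. p n ` V n = W n)"

definition lifts_against where
  "lifts_against scP VP AP scM VM AM scN VN AN p \<longleftrightarrow>
     (\<forall>g. is_lmod_hom scP VP AP scN VN AN g \<longrightarrow>
        (\<exists>h. is_lmod_hom scP VP AP scM VM AM h \<and>
             (\<forall>n\<ge>-1. \<forall>x\<in>VP n. p n (h n x) = g n x)))"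

text \<open>P_q([m]) is the free k-vector space on hom q m: finitely supported k-valued
  functions on morphisms with support in hom q m.\<close>
definition Psc :: "'k::field \<Rightarrow> ((nat \<Rightarrow> nat) \<Rightarrow>\<^sub>0 'k) \<Rightarrow> ((nat \<Rightarrow> nat) \<Rightarrow>\<^sub>0 'k)" where
  "Psc c p = Poly_Mapping.map (\<lambda>x. c * x) p"

definition PV :: "nat \<Rightarrow> int \<Rightarrow> ((nat \<Rightarrow> nat) \<Rightarrow>\<^sub>0 'k::field) set" where
  "PV q m = {p. Poly_Mapping.keys p \<subseteq> hom (int q) m}"

definition PA :: "nat \<Rightarrow> int \<Rightarrow> int \<Rightarrow> (nat \<Rightarrow> nat) \<Rightarrow>
    ((nat \<Rightarrow> nat) \<Rightarrow>\<^sub>0 'k::field) \<Rightarrow> ((nat \<Rightarrow> nat) \<Rightarrow>\<^sub>0 'k)" where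
  "PA q m n f p = (\<Sum>g\<in>Poly_Mapping.keys p.
      Poly_Mapping.single (cmp (int q) f g) (Poly_Mapping.lookup p g))"

definition Pd :: "nat \<Rightarrow> int \<Rightarrow> ((nat \<Rightarrow> nat) \<Rightarrow>\<^sub>0 'k::field) \<Rightarrow> ((nat \<Rightarrow> nat) \<Rightarrow>\<^sub>0 'k)" where
  "Pd q m p = (\<Sum>g\<in>Poly_Mapping.keys p. \<Sum>i\<le>q.
      Poly_Mapping.single (cmp (int q - 1) g (delta (int q) i))
        ((-1) ^ i * Poly_Mapping.lookup p g))"

definition KV :: "int \<Rightarrow> 'k::field set" where
  "KV m = (if 0 \<le> m then UNIV else {0})"

definition KA :: "int \<Rightarrow> int \<Rightarrow> (nat \<Rightarrow> nat) \<Rightarrow> 'k::field \<Rightarrow> 'k" where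
  "KA m n f x = (if 0 \<le> m then x else 0)"

definition eps :: "int \<Rightarrow> ((nat \<Rightarrow> nat) \<Rightarrow>\<^sub>0 'k::field) \<Rightarrow> 'k" where
  "eps m p = (if 0 \<le> m then (\<Sum>g\<in>Poly_Mapping.keys p. Poly_Mapping.lookup p g) else 0)"

end

theory Submission
  imports Defs
begin


definition lext :: "('a \<Rightarrow> 'k::zero \<Rightarrow> 'v::comm_monoid_add) \<Rightarrow> ('a \<Rightarrow>\<^sub>0 'k) \<Rightarrow> 'v" where
  "lext F p = (\<Sum>g\<in>Poly_Mapping.keys p. F g (Poly_Mapping.lookup p g))"

lemma lext_superset:
  assumes "\<And>g. F g 0 = 0" "finite S" "Poly_Mapping.keys p \<subseteq> S"
  shows "lext F p = (\<Sum>g\<in>S. F g (Poly_Mapping.lookup p g))"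
  unfolding lext_def
  by (rule sum.mono_neutral_left) (use assms in \<open>auto simp: in_keys_iff\<close>)

lemma lext_add:
  fixes F :: "'a \<Rightarrow> 'k::comm_monoid_add \<Rightarrow> 'v::ab_group_add"
  assumes "\<And>g a b. F g (a + b) = F g a + F g b"
  shows "lext F (p + q) = lext F p + lext F q"
proof -
  have z: "F g 0 = 0" for g using assms[of g 0 0] by simp
  let ?S = "Poly_Mapping.keys p \<union> Poly_Mapping.keys q"
  have fin: "finite ?S" by simp
  have k: "Poly_Mapping.keys (p + q) \<subseteq> ?S" by (rule keys_add)
  show ?thesis
    using lext_superset[of F, OF z fin k] lext_superset[of F, OF z fin, of p] lext_superset[of F, OF z fin, of q]
    by (simp add: lookup_add assms sum.distrib)
qed

lemma lext_single:
  assumes "\<And>g. F g 0 = 0"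
  shows "lext F (Poly_Mapping.single g c) = F g c"
  using assms by (cases "c = 0") (auto simp: lext_def)

lemma lext_zero [simp]: "lext F 0 = 0"
  by (simp add: lext_def)

lemma pm_as_sum:
  fixes p :: "'a \<Rightarrow>\<^sub>0 'k::comm_monoid_add"
  shows "p = (\<Sum>g\<in>Poly_Mapping.keys p. Poly_Mapping.single g (Poly_Mapping.lookup p g))"
  by (rule poly_mapping_eqI) (simp add: lookup_sum lookup_single when_def in_keys_iff)

lemma additive_on_sum:
  fixes L :: "('a \<Rightarrow>\<^sub>0 'k::comm_monoid_add) \<Rightarrow> 'v::ab_group_add"
  assumes add: "\<And>x y. Poly_Mapping.keys x \<subseteq> S \<Longrightarrow> Poly_Mapping.keys y \<subseteq> S \<Longrightarrow> L (x + y) = L x + L y"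
  and fin: "finite A" and AS: "A \<subseteq> S"
  shows "L (\<Sum>g\<in>A. Poly_Mapping.single g (c g)) = (\<Sum>g\<in>A. L (Poly_Mapping.single g (c g)))"
  using fin AS
proof (induction A rule: finite_induct)
  case empty
  have "L 0 = L 0 + L 0" using add[of 0 0] by simp
  then show ?case by simp
next
  case (insert a A)
  have k: "Poly_Mapping.keys (\<Sum>g\<in>A. Poly_Mapping.single g (c g)) \<subseteq> S"
    using keys_sum[of "\<lambda>g. Poly_Mapping.single g (c g)" A] insert.prems by auto
  have k2: "Poly_Mapping.keys (Poly_Mapping.single a (c a)) \<subseteq> S" using insert.prems by auto
  show ?case using insert add[OF k2 k] by simp
qed

lemma ext_on:
  fixes La Lb :: "('a \<Rightarrow>\<^sub>0 'k::comm_monoid_add) \<Rightarrow> 'v::ab_group_add"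
  assumes a1: "\<And>x y. Poly_Mapping.keys x \<subseteq> S \<Longrightarrow> Poly_Mapping.keys y \<subseteq> S \<Longrightarrow> La (x + y) = La x + La y"
  and a2: "\<And>x y. Poly_Mapping.keys x \<subseteq> S \<Longrightarrow> Poly_Mapping.keys y \<subseteq> S \<Longrightarrow> Lb (x + y) = Lb x + Lb y"
  and b: "\<And>g c. g \<in> S \<Longrightarrow> La (Poly_Mapping.single g c) = Lb (Poly_Mapping.single g c)"
  and p: "Poly_Mapping.keys p \<subseteq> S"
  shows "La p = Lb p"
proof -
  have "La p = La (\<Sum>g\<in>Poly_Mapping.keys p. Poly_Mapping.single g (Poly_Mapping.lookup p g))"
    by (subst pm_as_sum) rule
  also have "\<dots> = (\<Sum>g\<in>Poly_Mapping.keys p. La (Poly_Mapping.single g (Poly_Mapping.lookup p g)))"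
    by (rule additive_on_sum[OF a1]) (use p in auto)
  also have "\<dots> = (\<Sum>g\<in>Poly_Mapping.keys p. Lb (Poly_Mapping.single g (Poly_Mapping.lookup p g)))"
    using b p by (intro sum.cong) auto
  also have "\<dots> = Lb (\<Sum>g\<in>Poly_Mapping.keys p. Poly_Mapping.single g (Poly_Mapping.lookup p g))"
    by (rule additive_on_sum[OF a2, symmetric]) (use p in auto)
  also have "\<dots> = Lb p" by (subst (2) pm_as_sum) rule
  finally show ?thesis .
qed

lemma keys_lext_single:
  assumes "\<And>g c. g \<in> Poly_Mapping.keys p \<Longrightarrow> Poly_Mapping.keys (F g c) \<subseteq> T"
  shows "Poly_Mapping.keys (lext F p) \<subseteq> T"
  unfolding lext_def using keys_sum assms by fastforce

lemma lookup_Psc: "Poly_Mapping.lookup (Psc c p) k = c * Poly_Mapping.lookup p k"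
  unfolding Psc_def by transfer (simp add: when_def)

lemma Psc_single: "Psc c (Poly_Mapping.single g a) = Poly_Mapping.single g (c * a)"
  unfolding Psc_def by simp

lemma Psc_add: "Psc c (x + y) = Psc c x + Psc c y"
  by (rule poly_mapping_eqI) (simp add: lookup_Psc lookup_add distrib_left)

lemma keys_Psc: "Poly_Mapping.keys (Psc c p) \<subseteq> Poly_Mapping.keys p"
  by (auto simp: in_keys_iff lookup_Psc)

lemma vs_Psc: "vector_space (Psc :: 'k::field \<Rightarrow> _)"
  by unfold_locales (auto intro!: poly_mapping_eqI simp: lookup_Psc lookup_add algebra_simps)

lemma vs_mult: "vector_space ((*) :: 'k::field \<Rightarrow> 'k \<Rightarrow> 'k)"
  by unfold_locales (auto simp: algebra_simps)



lemma ob_nat: "ob (int q) = {..q}" by (auto simp: ob_def)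
lemma ob_nat1: "ob (int q - 1) = {..<q}" by (auto simp: ob_def)
lemma ob_neg: "m < 0 \<Longrightarrow> ob m = {}" by (auto simp: ob_def)
lemma ob_Suc: "ob (int q + 1) = {..Suc q}" by (auto simp: ob_def)

lemma hom_D: "f \<in> hom m n \<Longrightarrow> x \<in> ob m \<Longrightarrow> f x \<in> ob n"
  by (auto simp: hom_def)
lemma hom_ext: "f \<in> hom m n \<Longrightarrow> x \<notin> ob m \<Longrightarrow> f x = undefined"
  by (auto simp: hom_def)

lemma cmp_hom:
  assumes f: "f \<in> hom l m" and g: "g \<in> hom m n"
  shows "cmp l g f \<in> hom l n"
proof -
  have fA: "\<And>x. x \<in> ob l \<Longrightarrow> f x \<in> ob m" and gA: "\<And>x. x \<in> ob m \<Longrightarrow> g x \<in> ob n"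
    using f g by (auto simp: hom_def)
  have fi: "inj_on f (ob l)" and gi: "inj_on g (ob m)" using f g by (auto simp: hom_def)
  have fm: "mono_on (ob l) f" and gm: "mono_on (ob m) g" using f g by (auto simp: hom_def)
  have e: "cmp l g f = (\<lambda>x\<in>ob l. g (f x))" by (simp add: cmp_def compose_def)
  have "inj_on (g \<circ> f) (ob l)"
    by (rule comp_inj_on[OF fi]) (rule inj_on_subset[OF gi], use fA in auto)
  then have i: "inj_on (\<lambda>x\<in>ob l. g (f x)) (ob l)"
    by (simp add: inj_on_def)
  have mo: "mono_on (ob l) (\<lambda>x\<in>ob l. g (f x))"
  proof (rule mono_onI)
    fix r s assume r: "r \<in> ob l" and s: "s \<in> ob l" and rs: "r \<le> s"
    have "f r \<le> f s" using fm r s rs by (simp add: mono_on_def)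
    then have "g (f r) \<le> g (f s)" using gm fA[OF r] fA[OF s] by (simp add: mono_on_def)
    then show "(\<lambda>x\<in>ob l. g (f x)) r \<le> (\<lambda>x\<in>ob l. g (f x)) s" using r s by simp
  qed
  show ?thesis unfolding e hom_def using i mo fA gA by auto
qed

lemma cmp_assoc: "f \<in> hom l m \<Longrightarrow> cmp l (cmp m h g) f = cmp l h (cmp l g f)"
  unfolding cmp_def by (rule compose_assoc[symmetric]) (auto simp: hom_def)

lemma cmp_idm_left: "f \<in> hom q m \<Longrightarrow> cmp q (idm m) f = f"
  unfolding cmp_def idm_def hom_def
  by (auto simp: compose_def fun_eq_iff PiE_def extensional_def Pi_def)

lemma cmp_idm_right: "f \<in> hom q n \<Longrightarrow> cmp q f (idm q) = f"
  unfolding cmp_def idm_def hom_def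
  by (auto simp: compose_def fun_eq_iff PiE_def extensional_def Pi_def)

lemma idm_hom: "idm m \<in> hom m m"
  by (auto simp: idm_def hom_def inj_on_def mono_on_def)

lemma delta_hom: "i \<le> q \<Longrightarrow> delta (int q) i \<in> hom (int q - 1) (int q)"
  unfolding delta_def hom_def ob_nat ob_nat1
  by (auto simp: inj_on_def mono_on_def)

definition cone :: "nat \<Rightarrow> (nat \<Rightarrow> nat) \<Rightarrow> (nat \<Rightarrow> nat)" where
  "cone q g = (\<lambda>j\<in>ob (int q + 1). if j = 0 then 0 else g (j - 1))"

lemma hom_mono: "g \<in> hom (int q) m \<Longrightarrow> a \<le> b \<Longrightarrow> b \<le> q \<Longrightarrow> g a \<le> g b"
  unfolding hom_def ob_nat by (auto simp: mono_on_def)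

lemma hom_strict:
  assumes g: "g \<in> hom (int q) m" and ab: "a < b" and b: "b \<le> q"
  shows "g a < g b"
proof -
  have "g a \<le> g b" using hom_mono[OF g, of a b] ab b by simp
  moreover have "inj_on g {..q}" using g unfolding hom_def ob_nat by simp
  then have "g a \<noteq> g b" using ab b unfolding inj_on_def by (metis atMost_iff less_imp_le_nat order.trans less_irrefl)
  ultimately show ?thesis by simp
qed

lemma cone_hom:
  assumes g: "g \<in> hom (int q) m" and g0: "g 0 \<noteq> 0"
  shows "cone q g \<in> hom (int (Suc q)) m"
proof -
  have z: "0 \<in> ob m" using hom_D[OF g, of 0] by (simp add: ob_def)
  have pos: "j \<le> q \<Longrightarrow> g j \<noteq> 0" for j using hom_mono[OF g, of 0 j] g0 by simp
  have im: "j \<le> q \<Longrightarrow> g j \<in> ob m" for j using hom_D[OF g] by (simp add: ob_nat)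
  show ?thesis
    unfolding hom_def cone_def ob_nat ob_Suc
  proof (intro CollectI conjI)
    show "(\<lambda>j\<in>{..Suc q}. if j = 0 then 0 else g (j - 1)) \<in> {..Suc q} \<rightarrow>\<^sub>E ob m"
      using z im by auto
    show "inj_on (\<lambda>j\<in>{..Suc q}. if j = 0 then 0 else g (j - 1)) {..Suc q}"
      unfolding inj_on_def
    proof (intro ballI impI)
      fix x y assume x: "x \<in> {..Suc q}" and y: "y \<in> {..Suc q}"
        and e: "(\<lambda>j\<in>{..Suc q}. if j = 0 then 0 else g (j - 1)) x = (\<lambda>j\<in>{..Suc q}. if j = 0 then 0 else g (j - 1)) y"
      show "x = y"
      proof (cases "x = 0 \<or> y = 0")
        case True
        have "x - 1 \<le> q" "y - 1 \<le> q" using x y by auto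
        then show ?thesis using True e x y pos[of "x - 1"] pos[of "y - 1"] by (auto split: if_splits)
      next
        case False
        then have "g (x - 1) = g (y - 1)" using e x y by auto
        moreover have "x - 1 \<le> q" "y - 1 \<le> q" using x y by auto
        ultimately have "x - 1 = y - 1" using hom_strict[OF g]
          by (metis linorder_neqE_nat less_irrefl)
        then show ?thesis using False by arith
      qed
    qed
    show "mono_on {..Suc q} (\<lambda>j\<in>{..Suc q}. if j = 0 then 0 else g (j - 1))"
      unfolding mono_on_def using hom_mono[OF g] by auto
  qed
qed

lemma cmp_delta_apply: "x < q \<Longrightarrow> cmp (int q - 1) g (delta (int q) i) x = g (if x < i then x else Suc x)"
  by (simp add: cmp_def delta_def compose_def ob_nat1)

lemma fun_eq_on: "f \<in> extensional A \<Longrightarrow> g \<in> extensional A \<Longrightarrow> (\<And>x. x \<in> A \<Longrightarrow> f x = g x) \<Longrightarrow> f = g"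
  by (rule extensionalityI)

lemma simplicial:
  assumes "j < i" "i \<le> Suc q"
  shows "cmp (int q - 1) (cmp (int q) g (delta (int (Suc q)) i)) (delta (int q) j)
       = cmp (int q - 1) (cmp (int q) g (delta (int (Suc q)) j)) (delta (int q) (i - 1))"
  using assms
  by (auto simp: cmp_def compose_def delta_def ob_nat ob_nat1 fun_eq_iff)

lemma cone_delta0: "g \<in> hom (int q) m \<Longrightarrow> cmp (int q) (cone q g) (delta (int (Suc q)) 0) = g"
  by (rule fun_eq_on[of _ "ob (int q)"])
     (auto simp: cmp_def compose_def delta_def cone_def ob_nat ob_Suc hom_def PiE_def)

lemma cone_deltaSuc:
  assumes "q \<ge> 1" "i \<le> q"
  shows "cmp (int q) (cone q g) (delta (int (Suc q)) (Suc i)) = cone (q - 1) (cmp (int q - 1) g (delta (int q) i))"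
proof -
  have e: "int (q - 1) + 1 = int q" using assms by simp
  show ?thesis
    using assms unfolding cone_def e
    by (auto simp: ob_Suc cmp_def compose_def delta_def ob_nat ob_nat1 fun_eq_iff)
qed

lemma cone_of_delta0:
  assumes "q \<ge> 1" "g \<in> hom (int q) m" "g 0 = 0"
  shows "cone (q - 1) (cmp (int q - 1) g (delta (int q) 0)) = g"
proof -
  have e: "int (q - 1) + 1 = int q" using assms by simp
  show ?thesis
    by (rule fun_eq_on[of _ "ob (int q)"])
       (use assms in \<open>auto simp: e cone_def cmp_def compose_def delta_def ob_nat ob_nat1 hom_def PiE_def\<close>)
qed

definition e0 :: "nat \<Rightarrow> nat" where "e0 = (\<lambda>j\<in>ob 0. 0)"

lemma cone_delta1_0: "cmp 0 (cone 0 g) (delta 1 1) = e0"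
  by (auto simp: e0_def cmp_def compose_def delta_def cone_def ob_def fun_eq_iff)

lemma hom0_zero: "g \<in> hom 0 m \<Longrightarrow> g 0 = 0 \<Longrightarrow> g = e0"
  by (rule fun_eq_on[of _ "ob 0"]) (auto simp: e0_def hom_def ob_def PiE_def)



lemma add_sum:
  fixes L :: "'a::comm_monoid_add \<Rightarrow> 'b::ab_group_add"
  assumes "\<And>x y. L (x + y) = L x + L y"
  shows "L (sum u A) = (\<Sum>i\<in>A. L (u i))"
proof -
  have z: "L 0 = 0" using assms[of 0 0] by simp
  show ?thesis
    by (induction A rule: infinite_finite_induct) (auto simp: z assms)
qed

lemma PA_lext: "PA q m n f = lext (\<lambda>g c. Poly_Mapping.single (cmp (int q) f g) c)"
  by (rule ext) (simp add: PA_def lext_def)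

lemma PA_add: "PA q m n f (x + y) = PA q m n f x + PA q m n f y"
  unfolding PA_lext by (rule lext_add) (simp add: single_add)

lemma PA_single: "PA q m n f (Poly_Mapping.single g c) = Poly_Mapping.single (cmp (int q) f g) c"
  unfolding PA_lext by (rule lext_single) simp

lemma Pd_lext: "Pd q m = lext (\<lambda>g c. \<Sum>i\<le>q. Poly_Mapping.single (cmp (int q - 1) g (delta (int q) i)) ((-1) ^ i * c))"
  by (rule ext) (simp add: Pd_def lext_def)

lemma Pd_add: "Pd q m (x + y) = Pd q m x + Pd q m y"
  unfolding Pd_lext by (rule lext_add) (simp add: single_add distrib_left sum.distrib)

lemma Pd_single: "Pd q m (Poly_Mapping.single g c) = (\<Sum>i\<le>q. Poly_Mapping.single (cmp (int q - 1) g (delta (int q) i)) ((-1) ^ i * c))"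
  unfolding Pd_lext by (rule lext_single) simp

lemma Pd_zero[simp]: "Pd q m 0 = 0" unfolding Pd_lext by simp

lemma eps_add: "eps m (x + y) = eps m x + eps m y"
proof (cases "0 \<le> m")
  case True
  have "lext (\<lambda>g c. c) (x + y) = lext (\<lambda>g c. c) x + lext (\<lambda>g c. c) y"
    by (rule lext_add) simp
  then show ?thesis using True by (simp add: eps_def lext_def)
qed (simp add: eps_def)

lemma eps_single: "0 \<le> m \<Longrightarrow> eps m (Poly_Mapping.single g c) = c"
  by (cases "c = 0") (simp_all add: eps_def)

definition Hc :: "nat \<Rightarrow> ((nat \<Rightarrow> nat) \<Rightarrow>\<^sub>0 'k::field) \<Rightarrow> ((nat \<Rightarrow> nat) \<Rightarrow>\<^sub>0 'k)" where
  "Hc q = lext (\<lambda>g c. if g 0 \<noteq> 0 then Poly_Mapping.single (cone q g) c else 0)"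

lemma Hc_add: "Hc q (x + y) = Hc q x + Hc q y"
  unfolding Hc_def by (rule lext_add) (simp add: single_add)

lemma Hc_single: "Hc q (Poly_Mapping.single g c) = (if g 0 \<noteq> 0 then Poly_Mapping.single (cone q g) c else 0)"
  unfolding Hc_def by (rule lext_single) simp

lemma Hc_zero[simp]: "Hc q 0 = 0" unfolding Hc_def by simp

lemma PV_iff: "x \<in> PV q m \<longleftrightarrow> Poly_Mapping.keys x \<subseteq> hom (int q) m"
  by (simp add: PV_def)

lemma PA_PV: "x \<in> PV q m \<Longrightarrow> f \<in> hom m n \<Longrightarrow> PA q m n f x \<in> PV q n"
  unfolding PV_iff PA_lext
  by (rule keys_lext_single) (auto intro: cmp_hom)

lemma Pd_PV:
  assumes "q \<ge> 1" "x \<in> PV q m" shows "Pd q m x \<in> PV (q - 1) m"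
proof -
  have e: "int (q - 1) = int q - 1" using assms by simp
  show ?thesis
    unfolding PV_iff Pd_lext e
  proof (rule keys_lext_single)
    fix g c assume g: "g \<in> Poly_Mapping.keys x"
    then have gh: "g \<in> hom (int q) m" using assms by (auto simp: PV_iff)
    show "Poly_Mapping.keys (\<Sum>i\<le>q. Poly_Mapping.single (cmp (int q - 1) g (delta (int q) i)) ((-1) ^ i * c)) \<subseteq> hom (int q - 1) m"
      using keys_sum[of "\<lambda>i. Poly_Mapping.single (cmp (int q - 1) g (delta (int q) i)) ((-1) ^ i * c)" "{..q}"]
        cmp_hom[OF delta_hom gh] by fastforce
  qed
qed

lemma Hc_PV:
  assumes "x \<in> PV q m" shows "Hc q x \<in> PV (Suc q) m"
  unfolding PV_iff Hc_def
  by (rule keys_lext_single) (use assms cone_hom in \<open>auto simp: PV_iff\<close>)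

lemma Psc_PV: "x \<in> PV q m \<Longrightarrow> Psc c x \<in> PV q m"
  using keys_Psc by (auto simp: PV_iff)

lemma subspace_PV: "module.subspace (Psc :: 'k::field \<Rightarrow> _) (PV q m)"
proof -
  interpret vector_space "Psc :: 'k \<Rightarrow> _" by (rule vs_Psc)
  show ?thesis
  proof (rule subspaceI)
    show "0 \<in> PV q m" by (simp add: PV_iff)
    show "x + y \<in> PV q m" if "x \<in> PV q m" "y \<in> PV q m" for x y
      using that keys_add[of x y] by (auto simp: PV_iff)
    show "Psc c x \<in> PV q m" if "x \<in> PV q m" for c x using that by (rule Psc_PV)
  qed
qed

lemma Psc_zero_right[simp]: "Psc c 0 = 0" by (rule poly_mapping_eqI) (simp add: lookup_Psc)

lemma PV_lmod: "is_lmod (Psc :: 'k::field \<Rightarrow> _) (PV q) (PA q)"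
  unfolding is_lmod_def
proof (intro conjI allI impI ballI)
  show "vector_space (Psc :: 'k \<Rightarrow> _)" by (rule vs_Psc)
  show "module.subspace (Psc :: 'k \<Rightarrow> _) (PV q n)" for n by (rule subspace_PV)
  fix m n f x assume f: "f \<in> hom m n" and x: "(x :: _ \<Rightarrow>\<^sub>0 'k) \<in> PV q m"
  show "PA q m n f x \<in> PV q n" by (rule PA_PV[OF x f])
  show "PA q m n f (x + y) = PA q m n f x + PA q m n f y" for y by (rule PA_add)
  show "PA q m n f (Psc c x) = Psc c (PA q m n f x)" for c
    by (rule ext_on[where S = "hom (int q) m"]) (use x in \<open>auto simp: PA_add Psc_add PA_single Psc_single PV_iff\<close>)
next
  fix m x assume x: "(x :: _ \<Rightarrow>\<^sub>0 'k) \<in> PV q m"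
  show "PA q m m (idm m) x = x"
    by (rule ext_on[where S = "hom (int q) m"]) (use x in \<open>auto simp: PA_add PA_single PV_iff cmp_idm_left\<close>)
next
  fix l m n f g x assume f: "f \<in> hom l m" and g: "g \<in> hom m n" and x: "(x :: _ \<Rightarrow>\<^sub>0 'k) \<in> PV q l"
  show "PA q l n (cmp l g f) x = PA q m n g (PA q l m f x)"
    by (rule ext_on[where S = "hom (int q) l"]) (use x in \<open>auto simp: PA_add PA_single PV_iff cmp_assoc\<close>)
qed

lemma hom_nonneg: "f \<in> hom m n \<Longrightarrow> 0 \<le> m \<Longrightarrow> 0 \<le> n"
  using hom_D[of f m n 0] by (simp add: ob_def)

lemma K_lmod: "is_lmod ((*) :: 'k::field \<Rightarrow> 'k \<Rightarrow> 'k) KV KA"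
  unfolding is_lmod_def
proof (intro conjI allI impI ballI)
  show "vector_space ((*) :: 'k \<Rightarrow> _)" by (rule vs_mult)
  interpret vector_space "(*) :: 'k \<Rightarrow> _" by (rule vs_mult)
  show "subspace (KV n :: 'k set)" for n by (simp add: KV_def)
  fix m n f x assume f: "f \<in> hom m n" and x: "(x :: 'k) \<in> KV m"
  show "KA m n f x \<in> KV n" using x hom_nonneg[OF f] by (auto simp: KA_def KV_def)
  show "KA m n f (x + y) = KA m n f x + KA m n f y" for y by (simp add: KA_def)
  show "KA m n f (c * x) = c * KA m n f x" for c by (simp add: KA_def)
next
  fix m x assume "(x :: 'k) \<in> KV m"
  then show "KA m m (idm m) x = x" by (auto simp: KA_def KV_def split: if_splits)
next
  fix l m n f g x assume f: "f \<in> hom l m" and g: "g \<in> hom m n" and x: "(x :: 'k) \<in> KV l"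
  show "KA l n (cmp l g f) x = KA m n g (KA l m f x)"
    using hom_nonneg[OF f] by (simp add: KA_def)
qed



lemma hom_neg_empty: "m < 0 \<Longrightarrow> hom (int q) m = {}"
  using hom_D[of _ "int q" m 0] by (auto simp: ob_def)

lemma PV_neg: "m < 0 \<Longrightarrow> x \<in> PV q m \<Longrightarrow> x = 0"
  using hom_neg_empty[of m q] by (auto simp: PV_iff)

lemma Psc_sum: "Psc c (sum u A) = (\<Sum>i\<in>A. Psc c (u i))"
  by (rule add_sum) (rule Psc_add)

lemma Pd_hom:
  assumes q: "q \<ge> 1"
  shows "is_lmod_hom (Psc :: 'k::field \<Rightarrow> _) (PV q) (PA q) Psc (PV (q - 1)) (PA (q - 1)) (Pd q)"
  unfolding is_lmod_hom_def
proof (intro conjI allI impI ballI)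
  have e: "int (q - 1) = int q - 1" "int (q - Suc 0) = int q - 1" using q by simp_all
  fix n x assume x: "(x :: _ \<Rightarrow>\<^sub>0 'k) \<in> PV q n"
  show "Pd q n x \<in> PV (q - 1) n" by (rule Pd_PV[OF q x])
  show "Pd q n (x + y) = Pd q n x + Pd q n y" for y by (rule Pd_add)
  show "Pd q n (Psc c x) = Psc c (Pd q n x)" for c
    by (rule ext_on[where S = "hom (int q) n"])
       (use x in \<open>auto simp: Pd_add Psc_add Pd_single Psc_single PV_iff Psc_sum mult.left_commute\<close>)
next
  have e: "int (q - 1) = int q - 1" "int (q - Suc 0) = int q - 1" using q by simp_all
  fix m n f x assume f: "f \<in> hom m n" and x: "(x :: _ \<Rightarrow>\<^sub>0 'k) \<in> PV q m"
  show "Pd q n (PA q m n f x) = PA (q - 1) m n f (Pd q m x)"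
  proof (rule ext_on[where S = "hom (int q) m" and La = "\<lambda>x. Pd q n (PA q m n f x)" and Lb = "\<lambda>x. PA (q - 1) m n f (Pd q m x)"])
    fix g c assume g: "g \<in> hom (int q) m"
    have "PA (q - 1) m n f (Pd q m (Poly_Mapping.single g c))
        = (\<Sum>i\<le>q. PA (q - 1) m n f (Poly_Mapping.single (cmp (int q - 1) g (delta (int q) i)) ((-1) ^ i * c)))"
      unfolding Pd_single by (rule add_sum) (rule PA_add)
    also have "\<dots> = (\<Sum>i\<le>q. Poly_Mapping.single (cmp (int q - 1) (cmp (int q) f g) (delta (int q) i)) ((-1) ^ i * c))"
      by (intro sum.cong refl) (simp add: PA_single e cmp_assoc[OF delta_hom])
    finally show "Pd q n (PA q m n f (Poly_Mapping.single g c)) = PA (q - 1) m n f (Pd q m (Poly_Mapping.single g c))"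
      by (simp add: PA_single Pd_single)
  qed (use x in \<open>auto simp: PA_add Pd_add PV_iff\<close>)
qed

lemma eps_Psc: "eps m (Psc c x) = c * eps m x"
proof (cases "0 \<le> m")
  case True
  show ?thesis
    by (rule ext_on[where S = UNIV and La = "\<lambda>x. eps m (Psc c x)"])
       (use True in \<open>auto simp: eps_add Psc_add Psc_single eps_single distrib_left\<close>)
qed (simp add: eps_def)

lemma eps_hom: "is_lmod_hom (Psc :: 'k::field \<Rightarrow> _) (PV 0) (PA 0) (*) KV KA eps"
  unfolding is_lmod_hom_def
proof (intro conjI allI impI ballI)
  fix n x assume x: "(x :: _ \<Rightarrow>\<^sub>0 'k) \<in> PV 0 n"
  show "eps n x \<in> KV n" by (simp add: KV_def eps_def)
  show "eps n (x + y) = eps n x + eps n y" for y by (rule eps_add)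
  show "eps n (Psc c x) = c * eps n x" for c by (rule eps_Psc)
next
  fix m n f x assume f: "f \<in> hom m n" and x: "(x :: _ \<Rightarrow>\<^sub>0 'k) \<in> PV 0 m" and m: "m \<ge> -1"
  show "eps n (PA 0 m n f x) = KA m n f (eps m x)"
  proof (cases "0 \<le> m")
    case True
    have n: "0 \<le> n" by (rule hom_nonneg[OF f True])
    show ?thesis
      by (rule ext_on[where S = "hom (int 0) m"])
         (use x True n in \<open>auto simp: KA_def PA_add eps_add PA_single eps_single PV_iff\<close>)
  next
    case False
    then have "x = 0" using PV_neg x by force
    then show ?thesis using False by (simp add: KA_def PA_lext eps_def)
  qed
qed

lemma pair_cancel:
  fixes T :: "nat \<Rightarrow> nat \<Rightarrow> 'v::ab_group_add"
  assumes "\<And>i j. j < i \<Longrightarrow> i \<le> Suc q \<Longrightarrow> T j (i - 1) = - T i j"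
  shows "(\<Sum>i\<le>Suc q. \<Sum>j\<le>q. T i j) = 0"
proof -
  let ?P = "{..Suc q} \<times> {..q}"
  let ?A = "{p \<in> ?P. snd p < fst p}"
  let ?B = "{p \<in> ?P. fst p \<le> snd p}"
  have "(\<Sum>i\<le>Suc q. \<Sum>j\<le>q. T i j) = (\<Sum>p\<in>?P. T (fst p) (snd p))"
    by (simp add: sum.cartesian_product case_prod_beta)
  also have "?P = ?A \<union> ?B" by auto
  also have "(\<Sum>p\<in>?A \<union> ?B. T (fst p) (snd p)) = (\<Sum>p\<in>?A. T (fst p) (snd p)) + (\<Sum>p\<in>?B. T (fst p) (snd p))"
    by (rule sum.union_disjoint) auto
  also have "(\<Sum>p\<in>?B. T (fst p) (snd p)) = (\<Sum>p\<in>?A. - T (fst p) (snd p))"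
  proof (rule sum.reindex_bij_witness[where i = "\<lambda>p. (snd p, fst p - 1)" and j = "\<lambda>p. (Suc (snd p), fst p)"])
    fix a assume a: "a \<in> ?B"
    show "- T (fst (Suc (snd a), fst a)) (snd (Suc (snd a), fst a)) = T (fst a) (snd a)"
      using assms[of "fst a" "Suc (snd a)"] a by auto
  qed auto
  also have "\<dots> = - (\<Sum>p\<in>?A. T (fst p) (snd p))" by (simp add: sum_negf)
  finally show ?thesis by simp
qed

lemma Pd_Pd_single:
  assumes q: "q \<ge> 1" and g: "g \<in> hom (int (Suc q)) m"
  shows "Pd q m (Pd (Suc q) m (Poly_Mapping.single g c)) = (0 :: _ \<Rightarrow>\<^sub>0 'k::field)"
proof -
  have "Pd q m (Pd (Suc q) m (Poly_Mapping.single g c))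
      = (\<Sum>i\<le>Suc q. Pd q m (Poly_Mapping.single (cmp (int q) g (delta (int (Suc q)) i)) ((-1) ^ i * c)))"
  proof -
    have e: "int (Suc q) - 1 = int q" by simp
    show ?thesis unfolding Pd_single[of "Suc q" m g c] e by (rule add_sum[OF Pd_add])
  qed
  also have "\<dots> = (\<Sum>i\<le>Suc q. \<Sum>j\<le>q. Poly_Mapping.single (cmp (int q - 1) (cmp (int q) g (delta (int (Suc q)) i)) (delta (int q) j)) ((-1) ^ j * ((-1) ^ i * c)))"
    by (intro sum.cong refl) (simp only: Pd_single)
  also have "\<dots> = 0"
  proof (rule pair_cancel)
    fix i j :: nat assume ji: "j < i" "i \<le> Suc q"
    have s: "(-1::'k) ^ (i - 1) * ((-1) ^ j * c) = - ((-1) ^ j * ((-1) ^ i * c))"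
    proof -
      have "(-1::'k) ^ i = - ((-1) ^ (i - 1))" using ji by (cases i) auto
      then show ?thesis by (simp add: algebra_simps)
    qed
    show "Poly_Mapping.single (cmp (int q - 1) (cmp (int q) g (delta (int (Suc q)) j)) (delta (int q) (i - 1))) ((-1) ^ (i - 1) * ((-1) ^ j * c))
        = - Poly_Mapping.single (cmp (int q - 1) (cmp (int q) g (delta (int (Suc q)) i)) (delta (int q) j)) ((-1) ^ j * ((-1) ^ i * c))"
      using simplicial[OF ji, of g] s by (simp add: single_uminus mult.left_commute)
  qed
  finally show ?thesis .
qed



lemma neg_single_sum:
  fixes X :: "nat \<Rightarrow> (nat \<Rightarrow> nat)" and a :: "nat \<Rightarrow> 'k::field"
  shows "(\<Sum>i\<le>q. Poly_Mapping.single (X i) (- a i)) + (\<Sum>i\<le>q. Poly_Mapping.single (X i) (a i)) = 0"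
  by (simp add: single_uminus sum_negf)

lemma homotopy_single:
  assumes q: "q \<ge> 1" and g: "g \<in> hom (int q) m"
  shows "Pd (Suc q) m (Hc q (Poly_Mapping.single g c)) + Hc (q - 1) (Pd q m (Poly_Mapping.single g c))
         = Poly_Mapping.single g (c :: 'k::field)"
proof -
  define D where "D i = cmp (int q - 1) g (delta (int q) i)" for i
  have D0: "D i 0 = g (if 0 < i then 0 else 1)" for i
    unfolding D_def using q by (subst cmp_delta_apply) auto
  have Hd: "Hc (q - 1) (Pd q m (Poly_Mapping.single g c)) = (\<Sum>i\<le>q. Hc (q - 1) (Poly_Mapping.single (D i) ((-1) ^ i * c)))"
    unfolding Pd_single D_def by (rule add_sum[OF Hc_add])
  have g01: "g 0 < g 1" using hom_strict[OF g, of 0 1] q by simp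
  show ?thesis
  proof (cases "g 0 = 0")
    case False
    have Dnz: "D i 0 \<noteq> 0" for i using D0 False g01 by auto
    have "Hc (q - 1) (Pd q m (Poly_Mapping.single g c)) = (\<Sum>i\<le>q. Poly_Mapping.single (cone (q - 1) (D i)) ((-1) ^ i * c))"
      unfolding Hd by (intro sum.cong refl) (simp add: Hc_single Dnz)
    moreover have "Pd (Suc q) m (Hc q (Poly_Mapping.single g c))
        = Poly_Mapping.single g c + (\<Sum>i\<le>q. Poly_Mapping.single (cone (q - 1) (D i)) (- ((-1) ^ i * c)))"
    proof -
      have e: "int (Suc q) - 1 = int q" by simp
      have "Pd (Suc q) m (Hc q (Poly_Mapping.single g c))
          = (\<Sum>i\<le>Suc q. Poly_Mapping.single (cmp (int q) (cone q g) (delta (int (Suc q)) i)) ((-1) ^ i * c))"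
        unfolding Hc_single using False Pd_single[of "Suc q" m "cone q g" c] e by simp
      also have "\<dots> = Poly_Mapping.single (cmp (int q) (cone q g) (delta (int (Suc q)) 0)) c
          + (\<Sum>i\<le>q. Poly_Mapping.single (cmp (int q) (cone q g) (delta (int (Suc q)) (Suc i))) ((-1) ^ Suc i * c))"
        by (subst sum.atMost_Suc_shift) simp
      also have "\<dots> = Poly_Mapping.single g c + (\<Sum>i\<le>q. Poly_Mapping.single (cone (q - 1) (D i)) (- ((-1) ^ i * c)))"
        unfolding cone_delta0[OF g] D_def
        by (intro arg_cong2[where f = "(+)"] refl sum.cong) (simp_all del: of_nat_Suc add: cone_deltaSuc[OF q])
      finally show ?thesis .
    qed
    ultimately show ?thesis by (simp add: add.assoc neg_single_sum)
  next
    case True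
    obtain q' where q': "q = Suc q'" using q by (cases q) auto
    have "Hc (q - 1) (Pd q m (Poly_Mapping.single g c)) = Hc (q - 1) (Poly_Mapping.single (D 0) c)
        + (\<Sum>i\<le>q'. Hc (q - 1) (Poly_Mapping.single (D (Suc i)) ((-1) ^ Suc i * c)))"
      unfolding Hd by (simp only: q' sum.atMost_Suc_shift power_0 mult_1)
    also have "(\<Sum>i\<le>q'. Hc (q - 1) (Poly_Mapping.single (D (Suc i)) ((-1) ^ Suc i * c))) = 0"
      by (intro sum.neutral ballI) (simp add: Hc_single D0 True)
    also have "Hc (q - 1) (Poly_Mapping.single (D 0) c) = Poly_Mapping.single g c"
      using D0[of 0] g01 True cone_of_delta0[OF q g True] by (simp add: Hc_single D_def)
    finally show ?thesis using True by (simp add: Hc_single)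
  qed
qed

lemma homotopy0_single:
  assumes g: "g \<in> hom 0 m"
  shows "Pd 1 m (Hc 0 (Poly_Mapping.single g c)) + Poly_Mapping.single e0 (eps m (Poly_Mapping.single g c))
         = Poly_Mapping.single g (c :: 'k::field)"
proof -
  have m: "0 \<le> m" using hom_nonneg[OF g] by simp
  have E1: "cmp 0 (cone 0 g) (delta 1 0) = g" using cone_delta0[of g 0 m] g by simp
  have E2: "cmp 0 (cone 0 g) (delta 1 1) = e0" by (rule cone_delta1_0)
  show ?thesis
  proof (cases "g 0 = 0")
    case True
    then show ?thesis using hom0_zero[OF g True] m by (simp add: Hc_single eps_single)
  next
    case False
    have "Pd 1 m (Hc 0 (Poly_Mapping.single g c)) = Pd 1 m (Poly_Mapping.single (cone 0 g) c)"
      using False by (simp add: Hc_single)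
    also have "\<dots> = Poly_Mapping.single g c + Poly_Mapping.single e0 (- c)"
      using Pd_single[of 1 m "cone 0 g" c] E1 E2 by simp
    finally show ?thesis using m by (simp add: eps_single single_uminus)
  qed
qed

lemma homotopy:
  assumes q: "q \<ge> 1" and x: "x \<in> PV q m"
  shows "Pd (Suc q) m (Hc q x) + Hc (q - 1) (Pd q m x) = (x :: _ \<Rightarrow>\<^sub>0 'k::field)"
  by (rule ext_on[where S = "hom (int q) m" and La = "\<lambda>x. Pd (Suc q) m (Hc q x) + Hc (q - 1) (Pd q m x)" and Lb = "\<lambda>x. x"])
     (use x homotopy_single[OF q] in \<open>auto simp: PV_iff Pd_add Hc_add algebra_simps\<close>)

lemma homotopy0:
  assumes x: "x \<in> PV 0 m"
  shows "Pd 1 m (Hc 0 x) + Poly_Mapping.single e0 (eps m x) = (x :: _ \<Rightarrow>\<^sub>0 'k::field)"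
  by (rule ext_on[where S = "hom 0 m" and La = "\<lambda>x. Pd 1 m (Hc 0 x) + Poly_Mapping.single e0 (eps m x)" and Lb = "\<lambda>x. x"])
     (use x homotopy0_single in \<open>auto simp: PV_iff Pd_add Hc_add eps_add single_add algebra_simps\<close>)

lemma exact0: "{x \<in> PV 0 m. (eps m x :: 'k::field) = 0} = Pd 1 m ` PV 1 m"
proof
  show "{x \<in> PV 0 m. (eps m x :: 'k) = 0} \<subseteq> Pd 1 m ` PV 1 m"
  proof
    fix x :: "_ \<Rightarrow>\<^sub>0 'k" assume "x \<in> {x \<in> PV 0 m. eps m x = 0}"
    then have x: "x \<in> PV 0 m" "eps m x = 0" by auto
    have "x = Pd 1 m (Hc 0 x)" using homotopy0[OF x(1)] x(2) by simp
    moreover have "Hc 0 x \<in> PV 1 m" using Hc_PV[OF x(1)] by simp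
    ultimately show "x \<in> Pd 1 m ` PV 1 m" by blast
  qed
next
  show "Pd 1 m ` PV 1 m \<subseteq> {x \<in> PV 0 m. (eps m x :: 'k) = 0}"
  proof
    fix z :: "_ \<Rightarrow>\<^sub>0 'k" assume "z \<in> Pd 1 m ` PV 1 m"
    then obtain y where y: "y \<in> PV 1 m" and z: "z = Pd 1 m y" by blast
    have A: "Pd 1 m y \<in> PV 0 m" using Pd_PV[of 1 y m] y by simp
    have B: "eps m (Pd 1 m y) = 0"
    proof (rule ext_on[where S = "hom 1 m" and La = "\<lambda>y. eps m (Pd 1 m y)" and Lb = "\<lambda>y. 0"])
      fix g c assume g: "g \<in> hom 1 m"
      have m: "0 \<le> m" using hom_nonneg[OF g] by simp
      have "eps m (Pd 1 m (Poly_Mapping.single g c)) = (\<Sum>i\<le>1. eps m (Poly_Mapping.single (cmp (int 1 - 1) g (delta (int 1) i)) ((-1) ^ i * c)))"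
        unfolding Pd_single by (rule add_sum[OF eps_add])
      also have "\<dots> = 0" using m by (simp add: eps_single)
      finally show "eps m (Pd 1 m (Poly_Mapping.single g c)) = 0" .
    qed (use y in \<open>auto simp: PV_iff Pd_add eps_add\<close>)
    show "z \<in> {x \<in> PV 0 m. (eps m x :: 'k) = 0}" using A B z by simp
  qed
qed

lemma exactq:
  assumes q: "q \<ge> 1"
  shows "{x \<in> PV q m. Pd q m x = (0 :: _ \<Rightarrow>\<^sub>0 'k::field)} = Pd (q + 1) m ` PV (q + 1) m"
proof
  show "{x \<in> PV q m. Pd q m x = (0 :: _ \<Rightarrow>\<^sub>0 'k)} \<subseteq> Pd (q + 1) m ` PV (q + 1) m"
  proof
    fix x :: "_ \<Rightarrow>\<^sub>0 'k" assume "x \<in> {x \<in> PV q m. Pd q m x = 0}"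
    then have x: "x \<in> PV q m" "Pd q m x = 0" by auto
    have "x = Pd (q + 1) m (Hc q x)" using homotopy[OF q x(1)] x(2) by simp
    moreover have "Hc q x \<in> PV (q + 1) m" using Hc_PV[OF x(1)] by simp
    ultimately show "x \<in> Pd (q + 1) m ` PV (q + 1) m" by blast
  qed
next
  show "Pd (q + 1) m ` PV (q + 1) m \<subseteq> {x \<in> PV q m. Pd q m x = (0 :: _ \<Rightarrow>\<^sub>0 'k)}"
  proof
    fix z :: "_ \<Rightarrow>\<^sub>0 'k" assume "z \<in> Pd (q + 1) m ` PV (q + 1) m"
    then obtain y where y: "y \<in> PV (q + 1) m" and z: "z = Pd (q + 1) m y" by blast
    have A: "Pd (q + 1) m y \<in> PV q m" using Pd_PV[of "q + 1" y m] y by simp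
    have B: "Pd q m (Pd (q + 1) m y) = 0"
      by (rule ext_on[where S = "hom (int (Suc q)) m" and La = "\<lambda>y. Pd q m (Pd (q + 1) m y)" and Lb = "\<lambda>y. 0"])
         (use y Pd_Pd_single[OF q] in \<open>auto simp: PV_iff Pd_add\<close>)
    show "z \<in> {x \<in> PV q m. Pd q m x = (0 :: _ \<Rightarrow>\<^sub>0 'k)}" using A B z by simp
  qed
qed

lemma eps_onto: "m \<ge> -1 \<Longrightarrow> (eps m :: _ \<Rightarrow> 'k::field) ` PV 0 m = KV m"
proof (cases "0 \<le> m")
  case True
  have e0h: "e0 \<in> hom 0 m" using True by (auto simp: e0_def hom_def ob_def mono_on_def)
  have "c \<in> (eps m :: _ \<Rightarrow> 'k) ` PV 0 m" for c
    using e0h True by (intro image_eqI[where x = "Poly_Mapping.single e0 c"]) (auto simp: eps_single PV_iff)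
  then show ?thesis using True by (auto simp: KV_def)
next
  case False
  then have "hom 0 m = {}" using hom_neg_empty[of m 0] by simp
  then have "PV 0 m = {0}" by (auto simp: PV_iff)
  then show ?thesis using False by (auto simp: KV_def eps_def)
qed



lemma proj:
  fixes scM :: "'k::field \<Rightarrow> 'm::ab_group_add \<Rightarrow> 'm" and scN :: "'k \<Rightarrow> 'n::ab_group_add \<Rightarrow> 'n"
  assumes M: "is_lmod scM VM AM" and N: "is_lmod scN VN AN" and P: "is_lmod_epi scM VM AM scN VN AN p"
  shows "lifts_against (Psc :: 'k \<Rightarrow> _) (PV q) (PA q) scM VM AM scN VN AN p"
  unfolding lifts_against_def
proof (intro allI impI)
  fix gg assume G: "is_lmod_hom (Psc :: 'k \<Rightarrow> _) (PV q) (PA q) scN VN AN gg"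
  have vM: "vector_space scM" and subM: "\<And>n. n \<ge> -1 \<Longrightarrow> module.subspace scM (VM n)"
    and AMin: "\<And>m n f x. m \<ge> -1 \<Longrightarrow> n \<ge> -1 \<Longrightarrow> f \<in> hom m n \<Longrightarrow> x \<in> VM m \<Longrightarrow> AM m n f x \<in> VM n"
    and AMadd: "\<And>m n f x y. m \<ge> -1 \<Longrightarrow> n \<ge> -1 \<Longrightarrow> f \<in> hom m n \<Longrightarrow> x \<in> VM m \<Longrightarrow> y \<in> VM m \<Longrightarrow> AM m n f (x + y) = AM m n f x + AM m n f y"
    and AMsc: "\<And>m n f x c. m \<ge> -1 \<Longrightarrow> n \<ge> -1 \<Longrightarrow> f \<in> hom m n \<Longrightarrow> x \<in> VM m \<Longrightarrow> AM m n f (scM c x) = scM c (AM m n f x)"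
    and AMcmp: "\<And>l m n f g x. l \<ge> -1 \<Longrightarrow> m \<ge> -1 \<Longrightarrow> n \<ge> -1 \<Longrightarrow> f \<in> hom l m \<Longrightarrow> g \<in> hom m n \<Longrightarrow> x \<in> VM l \<Longrightarrow> AM l n (cmp l g f) x = AM m n g (AM l m f x)"
    using M unfolding is_lmod_def by blast+
  have mM: "module scM" using vM by (simp add: module_iff_vector_space)
  have pin: "\<And>n x. n \<ge> -1 \<Longrightarrow> x \<in> VM n \<Longrightarrow> p n x \<in> VN n"
    and padd: "\<And>n x y. n \<ge> -1 \<Longrightarrow> x \<in> VM n \<Longrightarrow> y \<in> VM n \<Longrightarrow> p n (x + y) = p n x + p n y"
    and psc: "\<And>n x c. n \<ge> -1 \<Longrightarrow> x \<in> VM n \<Longrightarrow> p n (scM c x) = scN c (p n x)"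
    and pnat: "\<And>m n f x. m \<ge> -1 \<Longrightarrow> n \<ge> -1 \<Longrightarrow> f \<in> hom m n \<Longrightarrow> x \<in> VM m \<Longrightarrow> p n (AM m n f x) = AN m n f (p m x)"
    and pon: "\<And>n. n \<ge> -1 \<Longrightarrow> p n ` VM n = VN n"
    using P unfolding is_lmod_epi_def is_lmod_hom_def by blast+
  have gin: "\<And>n x. n \<ge> -1 \<Longrightarrow> x \<in> PV q n \<Longrightarrow> gg n x \<in> VN n"
    and gadd: "\<And>n x y. n \<ge> -1 \<Longrightarrow> x \<in> PV q n \<Longrightarrow> y \<in> PV q n \<Longrightarrow> gg n (x + y) = gg n x + gg n y"
    and gsc: "\<And>n x c. n \<ge> -1 \<Longrightarrow> x \<in> PV q n \<Longrightarrow> gg n (Psc c x) = scN c (gg n x)"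
    and gnat: "\<And>m n f x. m \<ge> -1 \<Longrightarrow> n \<ge> -1 \<Longrightarrow> f \<in> hom m n \<Longrightarrow> x \<in> PV q m \<Longrightarrow> gg n (PA q m n f x) = AN m n f (gg m x)"
    using G unfolding is_lmod_hom_def by blast+
  have qq: "int q \<ge> -1" by simp
  have idPV: "Poly_Mapping.single (idm (int q)) (1::'k) \<in> PV q (int q)"
    using idm_hom[of "int q"] by (simp add: PV_iff)
  obtain x0 where x0: "x0 \<in> VM (int q)" and px0: "p (int q) x0 = gg (int q) (Poly_Mapping.single (idm (int q)) 1)"
    using gin[OF qq idPV] pon[OF qq] by (metis imageE)
  define h where "h n = lext (\<lambda>f c. scM c (AM (int q) n f x0))" for n
  have hsingle: "h n (Poly_Mapping.single f c) = scM c (AM (int q) n f x0)" for n f c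
    unfolding h_def by (rule lext_single) (simp add: module.scale_zero_left[OF mM])
  have hadd: "h n (x + y) = h n x + h n y" for n x y
    unfolding h_def by (rule lext_add) (simp add: module.scale_left_distrib[OF mM])
  have hin: "h n y \<in> VM n" if n: "n \<ge> -1" and y: "y \<in> PV q n" for n y
    unfolding h_def lext_def
  proof (rule module.subspace_sum[OF mM subM[OF n]])
    fix f assume "f \<in> Poly_Mapping.keys y"
    then have f: "f \<in> hom (int q) n" using y by (auto simp: PV_iff)
    show "scM (Poly_Mapping.lookup y f) (AM (int q) n f x0) \<in> VM n"
      by (rule module.subspace_scale[OF mM subM[OF n]]) (rule AMin[OF qq n f x0])
  qed
  have hhom: "is_lmod_hom (Psc :: 'k \<Rightarrow> _) (PV q) (PA q) scM VM AM h"
    unfolding is_lmod_hom_def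
  proof (intro conjI allI impI ballI)
    fix n x assume n: "n \<ge> -1" and x: "(x :: _ \<Rightarrow>\<^sub>0 'k) \<in> PV q n"
    show "h n x \<in> VM n" by (rule hin[OF n x])
    show "h n (x + y) = h n x + h n y" for y by (rule hadd)
    show "h n (Psc c x) = scM c (h n x)" for c
    proof (rule ext_on[where S = "hom (int q) n" and La = "\<lambda>x. h n (Psc c x)" and Lb = "\<lambda>x. scM c (h n x)"])
      fix a b :: "_ \<Rightarrow>\<^sub>0 'k"
      show "h n (Psc c (a + b)) = h n (Psc c a) + h n (Psc c b)" by (simp only: Psc_add hadd)
      show "scM c (h n (a + b)) = scM c (h n a) + scM c (h n b)"
        by (simp only: hadd module.scale_right_distrib[OF mM])
    next
      fix f and a :: 'k
      show "h n (Psc c (Poly_Mapping.single f a)) = scM c (h n (Poly_Mapping.single f a))"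
        by (simp only: Psc_single hsingle module.scale_scale[OF mM])
    qed (use x in \<open>simp add: PV_iff\<close>)
  next
    fix m n f x assume m: "m \<ge> -1" and n: "n \<ge> -1" and f: "f \<in> hom m n" and x: "(x :: _ \<Rightarrow>\<^sub>0 'k) \<in> PV q m"
    show "h n (PA q m n f x) = AM m n f (h m x)"
    proof (rule ext_on[where S = "hom (int q) m" and La = "\<lambda>x. h n (PA q m n f x)" and Lb = "\<lambda>x. AM m n f (h m x)"])
      fix a b :: "_ \<Rightarrow>\<^sub>0 'k" assume a: "Poly_Mapping.keys a \<subseteq> hom (int q) m" and b: "Poly_Mapping.keys b \<subseteq> hom (int q) m"
      show "AM m n f (h m (a + b)) = AM m n f (h m a) + AM m n f (h m b)"
        using a b by (simp add: hadd AMadd[OF m n f] hin[OF m] PV_iff)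
    next
      fix g and c :: 'k assume g: "g \<in> hom (int q) m"
      have gx: "AM (int q) m g x0 \<in> VM m" by (rule AMin[OF qq m g x0])
      show "h n (PA q m n f (Poly_Mapping.single g c)) = AM m n f (h m (Poly_Mapping.single g c))"
        by (simp add: PA_single hsingle AMcmp[OF qq m n g f x0] AMsc[OF m n f gx])
    qed (use x in \<open>auto simp: PV_iff hadd PA_add\<close>)
  qed
  moreover have "p n (h n x) = gg n x" if n: "n \<ge> -1" and x: "x \<in> PV q n" for n x
  proof (rule ext_on[where S = "hom (int q) n" and La = "\<lambda>x. p n (h n x)" and Lb = "gg n"])
    fix a b :: "_ \<Rightarrow>\<^sub>0 'k" assume a: "Poly_Mapping.keys a \<subseteq> hom (int q) n" and b: "Poly_Mapping.keys b \<subseteq> hom (int q) n"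
    show "p n (h n (a + b)) = p n (h n a) + p n (h n b)"
      using a b by (simp add: hadd padd[OF n] hin[OF n] PV_iff)
    show "gg n (a + b) = gg n a + gg n b"
      using a b by (simp add: gadd[OF n] PV_iff)
  next
    fix f and c :: 'k assume f: "f \<in> hom (int q) n"
    have fx: "AM (int q) n f x0 \<in> VM n" by (rule AMin[OF qq n f x0])
    have f1: "Poly_Mapping.single f (1::'k) \<in> PV q n" using f by (simp add: PV_iff)
    have "p n (h n (Poly_Mapping.single f c)) = scN c (p n (AM (int q) n f x0))"
      by (simp add: hsingle psc[OF n fx])
    also have "\<dots> = scN c (AN (int q) n f (gg (int q) (Poly_Mapping.single (idm (int q)) 1)))"
      by (simp add: pnat[OF qq n f x0] px0)
    also have "\<dots> = scN c (gg n (PA q (int q) n f (Poly_Mapping.single (idm (int q)) 1)))"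
      by (simp add: gnat[OF qq n f idPV])
    also have "\<dots> = scN c (gg n (Poly_Mapping.single f 1))"
      by (simp add: PA_single cmp_idm_right[OF f])
    also have "\<dots> = gg n (Psc c (Poly_Mapping.single f 1))"
      by (simp add: gsc[OF n f1])
    also have "\<dots> = gg n (Poly_Mapping.single f c)" by (simp add: Psc_single)
    finally show "p n (h n (Poly_Mapping.single f c)) = gg n (Poly_Mapping.single f c)" .
  qed (use x in \<open>simp add: PV_iff\<close>)
  ultimately show "\<exists>h. is_lmod_hom Psc (PV q) (PA q) scM VM AM h \<and> (\<forall>n\<ge>-1. \<forall>x\<in>PV q n. p n (h n x) = gg n x)"
    by blast
qed

theorem lemma3p6:
  fixes k_witness :: "'k::field itself"
  shows
  "(\<forall>q. is_lmod (Psc :: 'k \<Rightarrow> _) (PV q) (PA q)) \<and>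
   is_lmod ((*) :: 'k \<Rightarrow> 'k \<Rightarrow> 'k) KV KA \<and>
   (\<forall>q\<ge>1. is_lmod_hom (Psc :: 'k \<Rightarrow> _) (PV q) (PA q) Psc (PV (q - 1)) (PA (q - 1)) (Pd q)) \<and>
   is_lmod_hom (Psc :: 'k \<Rightarrow> _) (PV 0) (PA 0) (*) KV KA eps \<and>
   (\<forall>m\<ge>-1. (eps m :: _ \<Rightarrow> 'k) ` PV 0 m = KV m) \<and>
   (\<forall>m\<ge>-1. {x \<in> PV 0 m. (eps m x :: 'k) = 0} = Pd 1 m ` PV 1 m) \<and>
   (\<forall>q\<ge>1. \<forall>m\<ge>-1. {x \<in> PV q m. Pd q m x = (0 :: _ \<Rightarrow>\<^sub>0 'k)} = Pd (q + 1) m ` PV (q + 1) m) \<and>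
   (\<forall>(scM :: 'k \<Rightarrow> 'm::ab_group_add \<Rightarrow> 'm) VM AM (scN :: 'k \<Rightarrow> 'n::ab_group_add \<Rightarrow> 'n) VN AN p.
      is_lmod scM VM AM \<and> is_lmod scN VN AN \<and> is_lmod_epi scM VM AM scN VN AN p \<longrightarrow>
      (\<forall>q. lifts_against (Psc :: 'k \<Rightarrow> _) (PV q) (PA q) scM VM AM scN VN AN p))"
proof (intro conjI allI impI)
  show "is_lmod (Psc :: 'k \<Rightarrow> _) (PV q) (PA q)" for q by (rule PV_lmod)
  show "is_lmod ((*) :: 'k \<Rightarrow> 'k \<Rightarrow> 'k) KV KA" by (rule K_lmod)
  show "is_lmod_hom (Psc :: 'k \<Rightarrow> _) (PV q) (PA q) Psc (PV (q - 1)) (PA (q - 1)) (Pd q)" if "q \<ge> 1" for q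
    using that by (rule Pd_hom)
  show "is_lmod_hom (Psc :: 'k \<Rightarrow> _) (PV 0) (PA 0) (*) KV KA eps" by (rule eps_hom)
  show "(eps m :: _ \<Rightarrow> 'k) ` PV 0 m = KV m" if "m \<ge> -1" for m using that by (rule eps_onto)
  show "{x \<in> PV 0 m. (eps m x :: 'k) = 0} = Pd 1 m ` PV 1 m" for m by (rule exact0)
  show "{x \<in> PV q m. Pd q m x = (0 :: _ \<Rightarrow>\<^sub>0 'k)} = Pd (q + 1) m ` PV (q + 1) m" if "q \<ge> 1" for q m
    using that by (rule exactq)
  fix scM :: "'k \<Rightarrow> 'm::ab_group_add \<Rightarrow> 'm" and VM AM and scN :: "'k \<Rightarrow> 'n::ab_group_add \<Rightarrow> 'n" and VN AN p q
  assume "is_lmod scM VM AM \<and> is_lmod scN VN AN \<and> is_lmod_epi scM VM AM scN VN AN p"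
  then show "lifts_against (Psc :: 'k \<Rightarrow> _) (PV q) (PA q) scM VM AM scN VN AN p"
    using proj by blast
qed

end
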